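(* Let $q \neq 2$ be a prime power, let $n \geq 1$ be an integer, and let $W$ be the $n$-dimensional affine space over the finite field $\mathbb{F}_q$. Let $A_1,\ldots,A_m$ and $B_1,\ldots,B_m$ be affine subspaces of $W$ such that $A_i \cap B_i = \emptyset$ for each $1 \leq i \leq m$, and $A_i \cap B_j \neq \emptyset$ whenever $1 \leq i < j \leq m$. Then $m \leq q^n + 1$.
   Context: An affine subspace of $W = \mathbb{F}_q^n$ is a translate $v + U$ of a linear subspace $U$ of $\mathbb{F}_q^n$. *)

theory Defs
  imports "HOL-Analysis.Analysis"
begin

definition affine_subspace_F :: "('a::field ^ 'n) set \<Rightarrow> bool" where
  "affine_subspace_F A \<longleftrightarrow> (\<exists>v U. vec.subspace U \<and> A = (\<lambda>u. v + u) ` U)"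

end

theory Submission
  imports Defs
begin

definition dotF :: "'a::field ^ 'n \<Rightarrow> 'a ^ 'n \<Rightarrow> 'a" where
  "dotF w x = (\<Sum>k\<in>UNIV. w$k * x$k)"

lemma dotF_scale: "dotF (t *s w) x = t * dotF w x"
  by (simp add: dotF_def sum_distrib_left mult.assoc)

lemma sep:
  fixes U V :: "('a::field ^ 'n) set"
  assumes U: "vec.subspace U" and V: "vec.subspace V"
    and disj: "(\<lambda>u. a + u) ` U \<inter> (\<lambda>u. b + u) ` V = {}"
  shows "\<exists>w c. (\<forall>x\<in>(\<lambda>u. a + u) ` U. dotF w x + c = 0) \<and> (\<forall>x\<in>(\<lambda>u. b + u) ` V. dotF w x + c = 1)"
proof -
  define d where "d = b - a"
  define S where "S = vec.span (U \<union> V)"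
  have dS: "d \<notin> S"
  proof
    assume "d \<in> S"
    then obtain u v where uv: "u \<in> U" "v \<in> V" "d = u + v"
      unfolding S_def vec.span_Un using U V by (auto simp: vec.span_eq_iff[THEN iffD2])
    have "a + u = b + (- v)" using uv(3) unfolding d_def by (simp add: algebra_simps)
    moreover have "- v \<in> V" using V uv(2) by (simp add: vec.subspace_neg)
    ultimately show False using disj uv(1) by blast
  qed
  obtain B0 where B0: "B0 \<subseteq> S" "vec.independent B0" "S \<subseteq> vec.span B0"
    using vec.maximal_independent_subset by blast
  have sB0: "vec.span B0 \<subseteq> S"
    using B0(1) unfolding S_def by (simp add: vec.span_minimal vec.subspace_span)
  have dB0: "d \<notin> vec.span B0" using dS sB0 by blast
  have ind: "vec.independent (insert d B0)"
    using vec.independent_insertI[OF dB0 B0(2)] .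
  obtain k0 :: 'n where True by blast
  obtain g where g: "Vector_Spaces.linear (*s) (*s) g"
    "\<forall>x\<in>insert d B0. g x = (if x = d then axis k0 (1::'a) else 0)"
    using vec.linear_independent_extend[OF ind, of "\<lambda>x. if x = d then axis k0 1 else 0"] by blast
  have g0: "\<forall>x\<in>vec.span B0. g x = 0"
  proof
    fix x assume "x \<in> vec.span B0"
    moreover have "\<And>y. y \<in> B0 \<Longrightarrow> g y = 0" using g(2) dB0 vec.span_base by fastforce
    ultimately show "g x = 0" using vec.linear_eq_0_on_span[OF g(1)] by blast
  qed
  have gU: "g u = 0" if "u \<in> U" for u
    using g0 B0(3) that unfolding S_def by (meson Un_iff subsetD vec.span_base)
  have gV: "g v = 0" if "v \<in> V" for v
    using g0 B0(3) that unfolding S_def by (meson Un_iff subsetD vec.span_base)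
  have gd: "g d = axis k0 1" using g(2) by simp
  define w :: "'a ^ 'n" where "w = (\<chi> k. (g (axis k 1))$k0)"
  have hx: "(g x)$k0 = dotF w x" for x
  proof -
    have "g x = g (\<Sum>k\<in>UNIV. x$k *s axis k 1)" by (simp add: basis_expansion)
    also have "\<dots> = (\<Sum>k\<in>UNIV. x$k *s g (axis k 1))"
      by (simp add: vec.linear_sum[OF g(1)] vec.linear_scale[OF g(1)])
    finally have "(g x)$k0 = (\<Sum>k\<in>UNIV. x$k * (g (axis k 1))$k0)"
      by (simp add: sum_component)
    then show ?thesis by (simp add: dotF_def w_def mult.commute)
  qed
  have gadd: "g (x + y) = g x + g y" for x y by (rule vec.linear_add[OF g(1)])
  show ?thesis
  proof (intro exI conjI ballI)
    fix x assume "x \<in> (\<lambda>u. a + u) ` U"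
    then obtain u where "u \<in> U" "x = a + u" by blast
    then show "dotF w x + - (g a)$k0 = 0"
      using gU hx[of x] gadd by simp
  next
    fix x assume "x \<in> (\<lambda>u. b + u) ` V"
    then obtain v where v: "v \<in> V" "x = b + v" by blast
    have "b = a + d" by (simp add: d_def)
    then have "g x = g a + axis k0 1" using v gV gadd gd by simp
    then have "dotF w x = (g a)$k0 + 1" using hx[of x] by simp
    then show "dotF w x + - (g a)$k0 = 1" by simp
  qed
qed

definition clsF :: "'a::field ^ 'n \<Rightarrow> ('a ^ 'n) set" where
  "clsF v = {t *s v | t. t \<noteq> 0}"

lemma clsF_self: "v \<in> clsF v"
  unfolding clsF_def by (rule CollectI, rule exI[of _ 1]) simp

lemma clsF_mem: assumes "y \<in> clsF v" shows "clsF y = clsF v"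
proof -
  obtain t where t: "t \<noteq> 0" "y = t *s v" using assms unfolding clsF_def by blast
  show ?thesis
  proof
    show "clsF y \<subseteq> clsF v"
    proof
      fix z assume "z \<in> clsF y"
      then obtain r where r: "r \<noteq> 0" "z = r *s y" unfolding clsF_def by blast
      have "z = (r * t) *s v" using t r by (simp add: vector_smult_assoc)
      then show "z \<in> clsF v" unfolding clsF_def using t r by auto
    qed
    show "clsF v \<subseteq> clsF y"
    proof
      fix z assume "z \<in> clsF v"
      then obtain r where r: "r \<noteq> 0" "z = r *s v" unfolding clsF_def by blast
      have "z = (r / t) *s y" using t r by (simp add: vector_smult_assoc)
      moreover have "r / t \<noteq> 0" using t r by simp
      ultimately show "z \<in> clsF y" unfolding clsF_def by blast
    qed
  qed
qed

lemma clsF_inter: assumes "y \<in> clsF v" "y \<in> clsF u" shows "clsF v = clsF u"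
  using clsF_mem[OF assms(1)] clsF_mem[OF assms(2)] by simp

lemma clsF_two:
  fixes v :: "'a::{field,finite} ^ 'n"
  assumes "CARD('a) \<noteq> 2" "v \<noteq> 0"
  shows "\<exists>y\<in>clsF v. y \<noteq> z"
proof -
  have "UNIV \<noteq> {0::'a, 1}" using assms(1) by (metis card_2_iff zero_neq_one)
  then obtain t :: 'a where t: "t \<noteq> 0" "t \<noteq> 1" by blast
  have "t *s v \<noteq> v"
  proof
    assume "t *s v = v"
    then have "(t - 1) *s v = 0" by (simp add: vec.scale_left_diff_distrib)
    then show False using t assms(2) vec.scale_eq_0_iff by (metis right_minus_eq)
  qed
  moreover have "t *s v \<in> clsF v" using t unfolding clsF_def by auto
  ultimately show ?thesis using clsF_self[of v] by metis
qed

theorem theorem1p4: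
  fixes A B :: "nat \<Rightarrow> ('a::{field,finite} ^ 'n) set" and m :: nat
  assumes "CARD('a) \<noteq> 2"
    and "\<And>i. i \<in> {1..m} \<Longrightarrow> affine_subspace_F (A i)"
    and "\<And>i. i \<in> {1..m} \<Longrightarrow> affine_subspace_F (B i)"
    and "\<And>i. i \<in> {1..m} \<Longrightarrow> A i \<inter> B i = {}"
    and "\<And>i j. 1 \<le> i \<Longrightarrow> i < j \<Longrightarrow> j \<le> m \<Longrightarrow> A i \<inter> B j \<noteq> {}"
  shows "m \<le> CARD('a) ^ CARD('n) + 1"
proof -
  let ?P = "\<lambda>i w c. (\<forall>x\<in>A i. dotF w x + c = 0) \<and> (\<forall>x\<in>B i. dotF w x + c = 1)"
  have ex: "\<exists>w c. ?P i w c" if i: "i \<in> {1..m}" for i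
  proof -
    obtain a U where aU: "vec.subspace U" "A i = (\<lambda>u. a + u) ` U"
      using assms(2)[OF i] unfolding affine_subspace_F_def by blast
    obtain b V where bV: "vec.subspace V" "B i = (\<lambda>u. b + u) ` V"
      using assms(3)[OF i] unfolding affine_subspace_F_def by blast
    show ?thesis using sep[OF aU(1) bV(1)] assms(4)[OF i] aU(2) bV(2) by simp
  qed
  have neA: "A i \<noteq> {}" if i: "i \<in> {1..m}" for i
  proof -
    obtain a U where aU: "vec.subspace U" "A i = (\<lambda>u. a + u) ` U"
      using assms(2)[OF i] unfolding affine_subspace_F_def by blast
    have "a + 0 \<in> A i" using aU vec.subspace_0 by blast
    then show ?thesis by blast
  qed
  have neB: "B i \<noteq> {}" if i: "i \<in> {1..m}" for i
  proof -
    obtain a U where aU: "vec.subspace U" "B i = (\<lambda>u. a + u) ` U"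
      using assms(3)[OF i] unfolding affine_subspace_F_def by blast
    have "a + 0 \<in> B i" using aU vec.subspace_0 by blast
    then show ?thesis by blast
  qed
  define W where "W i = (SOME w. \<exists>c. ?P i w c)" for i
  define Cc where "Cc i = (SOME c. ?P i (W i) c)" for i
  have P: "?P i (W i) (Cc i)" if i: "i \<in> {1..m}" for i
  proof -
    have "\<exists>c. ?P i (W i) c" unfolding W_def using someI_ex[OF ex[OF i]] .
    then show ?thesis unfolding Cc_def by (rule someI_ex)
  qed
  define G where "G i x = dotF (W i) x + Cc i" for i x
  have Wnz: "W i \<noteq> 0" if i: "i \<in> {1..m}" for i
  proof
    assume "W i = 0"
    then have d0: "dotF (W i) x = 0" for x by (simp add: dotF_def)
    obtain xa where "xa \<in> A i" using neA[OF i] by blast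
    moreover obtain xb where "xb \<in> B i" using neB[OF i] by blast
    ultimately show False using P[OF i] d0 by force
  qed
  have L1: "G j x = l * G i x + 1" if ij: "1 \<le> i" "i < j" "j \<le> m" and l: "W j = l *s W i" for i j l x
  proof -
    have i: "i \<in> {1..m}" and j: "j \<in> {1..m}" using ij by auto
    obtain x0 where x0: "x0 \<in> A i" "x0 \<in> B j" using assms(5)[OF ij] by blast
    have e1: "dotF (W i) x0 + Cc i = 0" using P[OF i] x0 by blast
    have e2: "l * dotF (W i) x0 + Cc j = 1" using P[OF j] x0 l by (simp add: dotF_scale)
    have "Cc j = 1 + l * Cc i"
    proof -
      have "dotF (W i) x0 = - Cc i" using e1 by (simp add: eq_neg_iff_add_eq_0)
      then show ?thesis using e2 by (simp add: algebra_simps)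
    qed
    then show ?thesis unfolding G_def using l by (simp add: dotF_scale algebra_simps)
  qed
  have memcls: "\<exists>l. l \<noteq> 0 \<and> W i = l *s W k" if "clsF (W i) = clsF (W k)" for i k
  proof -
    have "W i \<in> clsF (W k)" using clsF_self[of "W i"] that by simp
    then show ?thesis unfolding clsF_def by blast
  qed
  have L2: False if kij: "1 \<le> k" "k < i" "i < j" "j \<le> m"
    and c1: "clsF (W i) = clsF (W k)" and c2: "clsF (W j) = clsF (W k)" for k i j
  proof -
    obtain l where l: "l \<noteq> 0" "W i = l *s W k" using memcls[OF c1] by blast
    obtain u where u: "u \<noteq> 0" "W j = u *s W k" using memcls[OF c2] by blast
    have wj: "W j = (u / l) *s W i" using l u by (simp add: vector_smult_assoc)
    have k: "k \<in> {1..m}" using kij by auto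
    obtain x where x: "x \<in> A k" using neA[OF k] by blast
    have gk: "G k x = 0" using P[OF k] x unfolding G_def by blast
    have "G i x = 1" using L1[of k i l x] kij l gk by simp
    moreover have "G j x = 1" using L1[of k j u x] kij u gk by simp
    moreover have "G j x = (u / l) * G i x + 1" using L1[of i j "u / l" x] kij wj by simp
    ultimately have "u / l = 0" by simp
    then show False using u l by simp
  qed
  define rr :: "('a ^ 'n) set \<Rightarrow> 'a ^ 'n" where "rr S = (SOME y. y \<in> S)" for S
  define ss :: "('a ^ 'n) set \<Rightarrow> 'a ^ 'n" where "ss S = (SOME y. y \<in> S \<and> y \<noteq> rr S)" for S
  have rr: "rr (clsF v) \<in> clsF v" for v
    unfolding rr_def using clsF_self by (metis someI)
  have ss: "ss (clsF v) \<in> clsF v \<and> ss (clsF v) \<noteq> rr (clsF v)" if "v \<noteq> 0" for v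
  proof -
    have "\<exists>y. y \<in> clsF v \<and> y \<noteq> rr (clsF v)" using clsF_two[OF assms(1) that, of "rr (clsF v)"] by blast
    then show ?thesis unfolding ss_def by (rule someI_ex)
  qed
  define psi where "psi i = (if \<exists>k\<in>{1..<i}. clsF (W k) = clsF (W i)
     then ss (clsF (W i)) else rr (clsF (W i)))" for i
  have psicls: "psi i \<in> clsF (W i)" if "i \<in> {1..m}" for i
    unfolding psi_def using rr ss[OF Wnz[OF that]] by simp
  have neq: "psi i \<noteq> psi j" if ij: "1 \<le> i" "i < j" "j \<le> m" for i j
  proof
    assume eq: "psi i = psi j"
    have i: "i \<in> {1..m}" and j: "j \<in> {1..m}" using ij by auto
    have c: "clsF (W i) = clsF (W j)"
      using clsF_inter[of "psi i" "W i" "W j"] psicls[OF i] psicls[OF j] eq by simp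
    have "\<exists>k\<in>{1..<j}. clsF (W k) = clsF (W j)" using c ij by (intro bexI[of _ i]) auto
    then have "psi j = ss (clsF (W j))" unfolding psi_def by (rule if_P)
    moreover have "psi i = rr (clsF (W i))"
    proof -
      have "\<not> (\<exists>k\<in>{1..<i}. clsF (W k) = clsF (W i))"
      proof
        assume "\<exists>k\<in>{1..<i}. clsF (W k) = clsF (W i)"
        then obtain k where "k \<in> {1..<i}" "clsF (W k) = clsF (W i)" by blast
        then have k1: "1 \<le> k" "k < i" and ck: "clsF (W k) = clsF (W i)" by auto
        have "clsF (W j) = clsF (W k)" using c ck by simp
        then show False using L2[OF k1 ij(2) ij(3) ck[symmetric]] by blast
      qed
      then show ?thesis unfolding psi_def by (rule if_not_P)
    qed
    ultimately show False using eq c ss[OF Wnz[OF j]] by simp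
  qed
  have "inj_on psi {1..m}"
  proof (rule inj_onI)
    fix i j assume "i \<in> {1..m}" "j \<in> {1..m}" "psi i = psi j"
    then show "i = j"
    proof (cases i j rule: linorder_cases)
      case less then show ?thesis using neq[of i j] \<open>psi i = psi j\<close> \<open>i \<in> {1..m}\<close> \<open>j \<in> {1..m}\<close> by simp
    next
      case greater then show ?thesis using neq[of j i] \<open>psi i = psi j\<close> \<open>i \<in> {1..m}\<close> \<open>j \<in> {1..m}\<close> by simp
    qed
  qed
  then have "card {1..m} \<le> card (UNIV :: ('a ^ 'n) set)"
    by (rule card_inj_on_le) simp_all
  then have "m \<le> CARD('a ^ 'n)" by simp
  then show ?thesis by simp
qed

end
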